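(* Let $\mathcal{M}_\Sigma$ be a trace monoid and $p\in(0,p_\Sigma)$. Let $S\subseteq\Sigma$ and let $a\in\Sigma\setminus S$ be such that $\mathscr{L}(a)\cap S\neq\emptyset$, and put $T=S\setminus\mathscr{L}(a)$. Then $$\frac{\mu_S(p)}{\mu_T(p)}=B_{S,p}(\mathcal{M}_T)\qquad\text{and}\qquad p\leqslant\frac{\mu_S(p)}{\mu_T(p)}\leqslant 1-p.$$
   Context: Let $\Sigma$ be a finite alphabet and $\mathcal{R}$ a reflexive and symmetric binary relation on $\Sigma$. For $S\subseteq\Sigma$, $\mathcal{M}_S$ is the trace monoid on $S$ (quotient of $S^*$ by the congruence generated by $ab=ba$ for $(a,b)\notin\mathcal{R}$), viewed as a submonoid of $\mathcal{M}_\Sigma$; $|x|$ is the length of a trace. $\mathscr{L}(a)=\{b\in\Sigma:(a,b)\in\mathcal{R}\}$. A clique of $S$ is a subset of $S$ of pairwise non-$\mathcal{R}$-related letters (empty set included); $\mu_S(X)=\sum_{\gamma\text{ clique of }S}(-1)^{|\gamma|}X^{|\gamma|}$, $\mu_\emptyset=1$. For $\Sigma\neq\emptyset$, $p_\Sigma$ is the unique root of smallest modulus of $\mu_\Sigma$ (real, $0<p_\Sigma\leqslant1$). For $p\in(0,p_\Sigma)$ and $S\subseteq\Sigma$, $\sum_{x\in\mathcal{M}_S}p^{|x|}=1/\mu_S(p)<\infty$, and $B_{S,p}$ is the probability distribution on $\mathcal{M}_S$ with $B_{S,p}(\{x\})=\mu_S(p)p^{|x|}$. *)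

theory Defs
  imports "HOL-Analysis.Analysis"
begin

text \<open>The relation R is the (reflexive, symmetric) dependence relation; letters a, b
  commute iff not R a b.  Traces are equivalence classes of words.\<close>

definition swap_step :: "('a \<Rightarrow> 'a \<Rightarrow> bool) \<Rightarrow> 'a list \<Rightarrow> 'a list \<Rightarrow> bool" where
  "swap_step R u v \<longleftrightarrow> (\<exists>xs a b ys. u = xs @ a # b # ys \<and> v = xs @ b # a # ys \<and> \<not> R a b)"

definition trace_eq :: "('a \<Rightarrow> 'a \<Rightarrow> bool) \<Rightarrow> 'a list \<Rightarrow> 'a list \<Rightarrow> bool" where
  "trace_eq R = (swap_step R)\<^sup>*\<^sup>*"

definition trace_of :: "('a \<Rightarrow> 'a \<Rightarrow> bool) \<Rightarrow> 'a list \<Rightarrow> 'a list set" where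
  "trace_of R w = {v. trace_eq R w v}"

definition trace_monoid :: "('a \<Rightarrow> 'a \<Rightarrow> bool) \<Rightarrow> 'a set \<Rightarrow> 'a list set set" where
  "trace_monoid R S = trace_of R ` lists S"

definition trace_len :: "'a list set \<Rightarrow> nat" where
  "trace_len x = length (SOME w. w \<in> x)"

definition ell :: "('a \<Rightarrow> 'a \<Rightarrow> bool) \<Rightarrow> 'a set \<Rightarrow> 'a \<Rightarrow> 'a set" where
  "ell R \<Sigma> a = {b \<in> \<Sigma>. R a b}"

definition cliques :: "('a \<Rightarrow> 'a \<Rightarrow> bool) \<Rightarrow> 'a set \<Rightarrow> 'a set set" where
  "cliques R S = {\<gamma>. \<gamma> \<subseteq> S \<and> (\<forall>x\<in>\<gamma>. \<forall>y\<in>\<gamma>. x \<noteq> y \<longrightarrow> \<not> R x y)}"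

definition mu :: "('a \<Rightarrow> 'a \<Rightarrow> bool) \<Rightarrow> 'a set \<Rightarrow> 'b::comm_ring_1 \<Rightarrow> 'b" where
  "mu R S X = (\<Sum>\<gamma>\<in>cliques R S. (-1) ^ card \<gamma> * X ^ card \<gamma>)"

text \<open>p_Sigma: the smallest modulus of a complex root of mu_Sigma (which, by the
  paper, is attained by a unique root, which is real and in (0,1]).\<close>
definition p_Sigma :: "('a \<Rightarrow> 'a \<Rightarrow> bool) \<Rightarrow> 'a set \<Rightarrow> real" where
  "p_Sigma R \<Sigma> = Inf {norm z | z :: complex. mu R \<Sigma> z = 0}"

definition B :: "('a \<Rightarrow> 'a \<Rightarrow> bool) \<Rightarrow> 'a set \<Rightarrow> real \<Rightarrow> 'a list set set \<Rightarrow> real" where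
  "B R S p A = infsum (\<lambda>x. mu R S p * p ^ trace_len x) A"

end

theory Submission
  imports Defs "HOL-Complex_Analysis.Complex_Analysis"
begin


locale tr =
  fixes R :: "'a \<Rightarrow> 'a \<Rightarrow> bool" and A :: "'a set"
  assumes reflR: "\<forall>x\<in>A. R x x"
    and symR: "\<forall>x\<in>A. \<forall>y\<in>A. R x y \<longrightarrow> R y x"
begin

abbreviation teq (infix "\<sim>\<^sub>t" 50) where "u \<sim>\<^sub>t v \<equiv> trace_eq R u v"

lemma swap_mset: "swap_step R u v \<Longrightarrow> mset u = mset v"
  unfolding swap_step_def by auto

lemma teq_mset: "u \<sim>\<^sub>t v \<Longrightarrow> mset u = mset v"
  unfolding trace_eq_def by (induction rule: rtranclp_induct) (auto dest: swap_mset)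

lemma teq_set: "u \<sim>\<^sub>t v \<Longrightarrow> set u = set v"
  by (metis teq_mset set_mset_mset)

lemma teq_length: "u \<sim>\<^sub>t v \<Longrightarrow> length u = length v"
  by (metis teq_mset size_mset)

lemma teq_refl: "u \<sim>\<^sub>t u" unfolding trace_eq_def by simp

lemma teq_trans: "u \<sim>\<^sub>t v \<Longrightarrow> v \<sim>\<^sub>t w \<Longrightarrow> u \<sim>\<^sub>t w"
  unfolding trace_eq_def by (rule rtranclp_trans)

lemma swap_sym: "swap_step R u v \<Longrightarrow> set u \<subseteq> A \<Longrightarrow> swap_step R v u"
proof -
  assume "swap_step R u v" "set u \<subseteq> A"
  then obtain xs a b ys where u: "u = xs @ a # b # ys" and v: "v = xs @ b # a # ys" and ab: "\<not> R a b"
    unfolding swap_step_def by blast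
  have "a \<in> A" "b \<in> A" using \<open>set u \<subseteq> A\<close> u by auto
  then have "\<not> R b a" using symR ab by blast
  then show ?thesis unfolding swap_step_def u v by blast
qed

lemma teq_sym: "u \<sim>\<^sub>t v \<Longrightarrow> set u \<subseteq> A \<Longrightarrow> v \<sim>\<^sub>t u"
  unfolding trace_eq_def
proof (induction rule: rtranclp_induct)
  case base then show ?case by simp
next
  case (step y z)
  have "set y \<subseteq> A" using step teq_set[of u y] unfolding trace_eq_def by auto
  then have "swap_step R z y" using swap_sym step by auto
  then show ?case using step by (meson converse_rtranclp_into_rtranclp)
qed

lemma swap_app: "swap_step R u v \<Longrightarrow> swap_step R (xs @ u @ ys) (xs @ v @ ys)"
  unfolding swap_step_def
  by (auto, metis append.assoc append_Cons)

lemma teq_app_mid: "u \<sim>\<^sub>t v \<Longrightarrow> (xs @ u @ ys) \<sim>\<^sub>t (xs @ v @ ys)"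
  unfolding trace_eq_def
proof (induction rule: rtranclp_induct)
  case base then show ?case by simp
next
  case (step y z) then show ?case using swap_app
    by (meson rtranclp.rtrancl_into_rtrancl)
qed

lemma teq_app: "u \<sim>\<^sub>t u' \<Longrightarrow> v \<sim>\<^sub>t v' \<Longrightarrow> (u @ v) \<sim>\<^sub>t (u' @ v')"
  using teq_app_mid[of u u' "[]" v] teq_app_mid[of v v' u' "[]"] teq_trans by auto

lemma teq_Cons: "u \<sim>\<^sub>t v \<Longrightarrow> (c # u) \<sim>\<^sub>t (c # v)"
  using teq_app_mid[of u v "[c]" "[]"] by simp

lemma swap_remove1:
  assumes "swap_step R u v" "set u \<subseteq> A"
  shows "remove1 c u = remove1 c v \<or> swap_step R (remove1 c u) (remove1 c v)"
proof -
  obtain xs a b ys where u: "u = xs @ a # b # ys" and v: "v = xs @ b # a # ys" and ab: "\<not> R a b"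
    using assms(1) unfolding swap_step_def by blast
  have "a \<in> A" "b \<in> A" using assms(2) u by auto
  show ?thesis
  proof (cases "c \<in> set xs")
    case True
    have "swap_step R (remove1 c xs @ a # b # ys) (remove1 c xs @ b # a # ys)"
      unfolding swap_step_def using ab by blast
    then show ?thesis using True unfolding u v by (auto simp: remove1_append)
  next
    case False
    show ?thesis
    proof (cases "c = a \<or> c = b")
      case True
      have "a \<noteq> b" using ab reflR \<open>a \<in> A\<close> by auto
      then show ?thesis using True False unfolding u v by (auto simp: remove1_append)
    next
      case False2: False
      have "swap_step R (xs @ a # b # remove1 c ys) (xs @ b # a # remove1 c ys)"
        unfolding swap_step_def using ab by blast
      then show ?thesis using False False2 unfolding u v by (auto simp: remove1_append)
    qed
  qed
qed

lemma teq_remove1: "u \<sim>\<^sub>t v \<Longrightarrow> set u \<subseteq> A \<Longrightarrow> remove1 c u \<sim>\<^sub>t remove1 c v"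
  unfolding trace_eq_def
proof (induction rule: rtranclp_induct)
  case base then show ?case by simp
next
  case (step y z)
  have "set y \<subseteq> A" using step teq_set[unfolded trace_eq_def] by auto
  then have "remove1 c y = remove1 c z \<or> swap_step R (remove1 c y) (remove1 c z)"
    using swap_remove1 step by auto
  then show ?case using step
    by (metis r_into_rtranclp teq_trans trace_eq_def)
qed

lemma teq_cancel: "(c # u) \<sim>\<^sub>t (c # v) \<Longrightarrow> set u \<subseteq> A \<Longrightarrow> c \<in> A \<Longrightarrow> u \<sim>\<^sub>t v"
  using teq_remove1[of "c # u" "c # v" c] by simp

lemma teq_cancel_app: "(xs @ u) \<sim>\<^sub>t (xs @ v) \<Longrightarrow> set (xs @ u) \<subseteq> A \<Longrightarrow> u \<sim>\<^sub>t v"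
proof (induction xs)
  case Nil then show ?case by simp
next
  case (Cons x xs) then show ?case using teq_cancel[of x "xs@u" "xs@v"] by auto
qed

lemma teq_filter:
  assumes "u \<sim>\<^sub>t v" "set u \<subseteq> A" "R c d" "c \<in> A" "d \<in> A"
  shows "filter (\<lambda>x. x = c \<or> x = d) u = filter (\<lambda>x. x = c \<or> x = d) v"
  using assms(1,2) unfolding trace_eq_def
proof (induction rule: rtranclp_induct)
  case base then show ?case by simp
next
  case (step y z)
  have yA: "set y \<subseteq> A" using step teq_set[unfolded trace_eq_def] by auto
  obtain xs a b ys where y: "y = xs @ a # b # ys" and z: "z = xs @ b # a # ys" and ab: "\<not> R a b"
    using step(2) unfolding swap_step_def by blast
  have "a \<in> A" "b \<in> A" using yA y by auto
  have "\<not> ((a = c \<or> a = d) \<and> (b = c \<or> b = d))"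
    using ab reflR symR assms(3,4,5) \<open>a \<in> A\<close> by blast
  then have "filter (\<lambda>x. x = c \<or> x = d) y = filter (\<lambda>x. x = c \<or> x = d) z"
    unfolding y z by auto
  then show ?case using step by simp
qed

lemma teq_init:
  assumes "(c # u) \<sim>\<^sub>t (d # v)" "set (c # u) \<subseteq> A" "c \<noteq> d"
  shows "\<not> R c d" "(c # u) \<sim>\<^sub>t (c # d # remove1 c v)"
proof -
  have dA: "d \<in> A" using teq_set[OF assms(1)] assms(2) by auto
  show "\<not> R c d"
  proof
    assume "R c d"
    then have "filter (\<lambda>x. x = c \<or> x = d) (c # u) = filter (\<lambda>x. x = c \<or> x = d) (d # v)"
      using teq_filter[OF assms(1) assms(2) \<open>R c d\<close> _ dA] assms(2) by auto
    then show False using assms(3) by simp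
  qed
  have "remove1 c (c # u) \<sim>\<^sub>t remove1 c (d # v)" using teq_remove1 assms by blast
  then have "u \<sim>\<^sub>t d # remove1 c v" using assms(3) by simp
  then show "(c # u) \<sim>\<^sub>t (c # d # remove1 c v)" by (rule teq_Cons)
qed

definition Init :: "'a list \<Rightarrow> 'a set" where "Init w = {c. \<exists>u. w \<sim>\<^sub>t c # u}"

lemma Init_commute:
  assumes "c \<in> Init w" "d \<in> Init w" "c \<noteq> d" "set w \<subseteq> A"
  shows "\<not> R c d"
proof -
  obtain u v where u: "w \<sim>\<^sub>t c # u" and v: "w \<sim>\<^sub>t d # v" using assms unfolding Init_def by auto
  have "c # u \<sim>\<^sub>t w" using teq_sym u assms(4) by auto
  then have "c # u \<sim>\<^sub>t d # v" using v teq_trans by blast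
  moreover have "set (c # u) \<subseteq> A" using teq_set[OF u] assms(4) by auto
  ultimately show ?thesis using teq_init assms(3) by blast
qed

lemma Init_divides:
  assumes "distinct xs" "set xs \<subseteq> Init w" "set w \<subseteq> A"
  shows "\<exists>u. w \<sim>\<^sub>t xs @ u"
  using assms
proof (induction xs arbitrary: w)
  case Nil then show ?case by (metis append_Nil teq_refl)
next
  case (Cons c ys)
  obtain v where v: "w \<sim>\<^sub>t c # v" using Cons.prems unfolding Init_def by auto
  have cvA: "set (c # v) \<subseteq> A" using teq_set[OF v] Cons.prems by auto
  have "set ys \<subseteq> Init v"
  proof
    fix d assume d: "d \<in> set ys"
    then have "d \<noteq> c" using Cons.prems by auto
    obtain v' where v': "w \<sim>\<^sub>t d # v'" using d Cons.prems unfolding Init_def by auto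
    have "c # v \<sim>\<^sub>t d # v'" using teq_sym[OF v] Cons.prems(3) v' teq_trans by blast
    then have "c # v \<sim>\<^sub>t c # d # remove1 c v'" using teq_init cvA \<open>d \<noteq> c\<close> by metis
    then have "v \<sim>\<^sub>t d # remove1 c v'" using teq_cancel cvA by auto
    then show "d \<in> Init v" unfolding Init_def by auto
  qed
  then obtain u where "v \<sim>\<^sub>t ys @ u" using Cons.IH[of v] Cons.prems(1) cvA by auto
  then have "w \<sim>\<^sub>t c # ys @ u" using v teq_Cons teq_trans by blast
  then show ?case by auto
qed

lemma commute_front:
  assumes "distinct xs" "\<forall>x\<in>set xs. \<forall>y\<in>set xs. x \<noteq> y \<longrightarrow> \<not> R x y" "c \<in> set xs"
  shows "xs \<sim>\<^sub>t c # remove1 c xs"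
  using assms
proof (induction xs)
  case Nil then show ?case by simp
next
  case (Cons x ys)
  show ?case
  proof (cases "x = c")
    case True then show ?thesis by (simp add: teq_refl)
  next
    case False
    then have "ys \<sim>\<^sub>t c # remove1 c ys" using Cons by auto
    then have 1: "x # ys \<sim>\<^sub>t x # c # remove1 c ys" by (rule teq_Cons)
    have "\<not> R x c" using Cons.prems False by auto
    then have "swap_step R (x # c # remove1 c ys) (c # x # remove1 c ys)"
      unfolding swap_step_def by (metis append_Nil)
    then have "x # c # remove1 c ys \<sim>\<^sub>t c # x # remove1 c ys" unfolding trace_eq_def by auto
    then show ?thesis using 1 False teq_trans by auto
  qed
qed

lemma divides_Init:
  assumes "distinct xs" "\<forall>x\<in>set xs. \<forall>y\<in>set xs. x \<noteq> y \<longrightarrow> \<not> R x y" "w \<sim>\<^sub>t xs @ u"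
  shows "set xs \<subseteq> Init w"
proof
  fix c assume "c \<in> set xs"
  then have "xs @ u \<sim>\<^sub>t c # (remove1 c xs @ u)"
    using commute_front[OF assms(1,2)] teq_app[OF _ teq_refl] by fastforce
  then show "c \<in> Init w" unfolding Init_def using assms(3) teq_trans by blast
qed

end



context tr begin

definition CC :: "'a set \<Rightarrow> nat \<Rightarrow> 'a list set set" where
  "CC U n = trace_of R ` {w \<in> lists U. length w = n}"

definition NN :: "'a set \<Rightarrow> nat \<Rightarrow> nat" where "NN U n = card (CC U n)"

definition InitC :: "'a list set \<Rightarrow> 'a set" where "InitC Y = {c. \<exists>u. c # u \<in> Y}"

lemma mem_trace_of: "x \<in> trace_of R w \<longleftrightarrow> w \<sim>\<^sub>t x"
  unfolding trace_of_def by simp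

lemma trace_of_eq: "set u \<subseteq> A \<Longrightarrow> u \<sim>\<^sub>t v \<Longrightarrow> trace_of R u = trace_of R v"
  unfolding trace_of_def using teq_sym teq_trans teq_set by blast

lemma trace_of_eqD: "trace_of R u = trace_of R v \<Longrightarrow> u \<sim>\<^sub>t v"
  using mem_trace_of teq_refl by blast

lemma trace_len_of: "trace_len (trace_of R w) = length w"
proof -
  have "w \<in> trace_of R w" using mem_trace_of teq_refl by blast
  then have "(SOME v. v \<in> trace_of R w) \<in> trace_of R w" by (rule someI)
  then show ?thesis unfolding trace_len_def using mem_trace_of teq_length by metis
qed

lemma InitC_of: "InitC (trace_of R w) = Init w"
  unfolding InitC_def Init_def mem_trace_of by simp

lemma Init_sub: "Init w \<subseteq> set w"
  unfolding Init_def using teq_set by fastforce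

lemma finite_CC: "finite U \<Longrightarrow> finite (CC U n)"
proof -
  assume "finite U"
  have "{w \<in> lists U. length w = n} = {xs. set xs \<subseteq> U \<and> length xs = n}" by auto
  then show ?thesis unfolding CC_def using finite_lists_length_eq[OF \<open>finite U\<close>, of n] by auto
qed

lemma CC_mono: "U \<subseteq> V \<Longrightarrow> CC U n \<subseteq> CC V n"
  unfolding CC_def by auto

lemma NN_mono: "U \<subseteq> V \<Longrightarrow> finite V \<Longrightarrow> NN U n \<le> NN V n"
  unfolding NN_def by (intro card_mono finite_CC CC_mono)

lemma NN_0: "NN U 0 = 1"
proof -
  have "CC U 0 = {trace_of R []}" unfolding CC_def by auto
  then show ?thesis unfolding NN_def by simp
qed

lemma clique_count:
  assumes "\<gamma> \<in> cliques R U" "U \<subseteq> A" "finite U" "card \<gamma> \<le> n"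
  shows "NN U (n - card \<gamma>) = card {Y \<in> CC U n. \<gamma> \<subseteq> InitC Y}"
proof -
  have fg: "finite \<gamma>" using assms(1,3) unfolding cliques_def by (auto intro: finite_subset)
  obtain g where g: "distinct g" "set g = \<gamma>" using finite_distinct_list[OF fg] by auto
  have lg: "length g = card \<gamma>" using g distinct_card by metis
  have gU: "set g \<subseteq> U" using g assms(1) unfolding cliques_def by auto
  have gc: "\<forall>x\<in>set g. \<forall>y\<in>set g. x \<noteq> y \<longrightarrow> \<not> R x y" using g assms(1) unfolding cliques_def by auto
  define k where "k = n - card \<gamma>"
  define h where "h X = trace_of R (g @ (SOME w. w \<in> X))" for X
  have h_of: "h (trace_of R w) = trace_of R (g @ w)" if "w \<in> lists U" for w
  proof -
    have "w \<in> trace_of R w" using mem_trace_of teq_refl by blast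
    then have "(SOME v. v \<in> trace_of R w) \<in> trace_of R w" by (rule someI)
    then have "w \<sim>\<^sub>t (SOME v. v \<in> trace_of R w)" using mem_trace_of by blast
    then have "g @ w \<sim>\<^sub>t g @ (SOME v. v \<in> trace_of R w)" using teq_app teq_refl by blast
    moreover have "set (g @ w) \<subseteq> A" using that gU assms(2) by auto
    ultimately show ?thesis unfolding h_def using trace_of_eq by metis
  qed
  have inj: "inj_on h (CC U k)"
  proof (rule inj_onI)
    fix X Y assume X: "X \<in> CC U k" and Y: "Y \<in> CC U k" and e: "h X = h Y"
    obtain x where x: "x \<in> lists U" "X = trace_of R x" using X unfolding CC_def by auto
    obtain y where y: "y \<in> lists U" "Y = trace_of R y" using Y unfolding CC_def by auto
    have "g @ x \<sim>\<^sub>t g @ y" using e h_of x y trace_of_eqD by metis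
    moreover have "set (g @ x) \<subseteq> A" using gU x assms(2) by auto
    ultimately have "x \<sim>\<^sub>t y" using teq_cancel_app[of g x y] by blast
    then show "X = Y" using x y trace_of_eq assms(2) by auto
  qed
  have img: "h ` CC U k = {Y \<in> CC U n. \<gamma> \<subseteq> InitC Y}"
  proof
    show "h ` CC U k \<subseteq> {Y \<in> CC U n. \<gamma> \<subseteq> InitC Y}"
    proof
      fix Z assume "Z \<in> h ` CC U k"
      then obtain x where x: "x \<in> lists U" "length x = k" "Z = h (trace_of R x)"
        unfolding CC_def by auto
      then have Z: "Z = trace_of R (g @ x)" using h_of by auto
      have "g @ x \<in> lists U" "length (g @ x) = n" using x gU lg assms(4) k_def by auto
      then have "Z \<in> CC U n" unfolding CC_def Z by auto
      moreover have "\<gamma> \<subseteq> InitC Z" unfolding Z InitC_of using divides_Init[OF g(1) gc teq_refl] g by auto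
      ultimately show "Z \<in> {Y \<in> CC U n. \<gamma> \<subseteq> InitC Y}" by auto
    qed
  next
    show "{Y \<in> CC U n. \<gamma> \<subseteq> InitC Y} \<subseteq> h ` CC U k"
    proof
      fix Y assume "Y \<in> {Y \<in> CC U n. \<gamma> \<subseteq> InitC Y}"
      then obtain y where y: "y \<in> lists U" "length y = n" "Y = trace_of R y" "\<gamma> \<subseteq> Init y"
        unfolding CC_def using InitC_of by auto
      have yA: "set y \<subseteq> A" using y assms(2) by auto
      obtain u where u: "y \<sim>\<^sub>t g @ u" using Init_divides[OF g(1) _ yA] y g by auto
      have "set u \<subseteq> U" using teq_set[OF u] y by auto
      moreover have "length u = k" using teq_length[OF u] y lg k_def by auto
      moreover have "Y = h (trace_of R u)"
      proof -
        have "h (trace_of R u) = trace_of R (g @ u)" using h_of \<open>set u \<subseteq> U\<close> by auto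
        also have "\<dots> = Y" using trace_of_eq[OF yA u] y by simp
        finally show ?thesis by simp
      qed
      ultimately show "Y \<in> h ` CC U k" unfolding CC_def by auto
    qed
  qed
  show ?thesis unfolding NN_def k_def[symmetric] using card_image[OF inj] img by simp
qed

lemma alt_Pow: "finite I \<Longrightarrow> I \<noteq> {} \<Longrightarrow> (\<Sum>X\<in>Pow I. (-1) ^ card X) = (0::'b::comm_ring_1)"
proof -
  assume "finite I" "I \<noteq> {}"
  then have "card I > 0" by auto
  then have "(0::'b) ^ card I = 0" by (cases "card I") auto
  then show ?thesis using prod_diff_conv_sum[OF \<open>finite I\<close>, of "\<lambda>_. 1" "\<lambda>_. (1::'b)"] by simp
qed

lemma moebius:
  assumes "U \<subseteq> A" "finite U" "n \<ge> 1"
  shows "(\<Sum>\<gamma>\<in>cliques R U. if card \<gamma> \<le> n then (-1) ^ card \<gamma> * of_nat (NN U (n - card \<gamma>)) else 0)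
     = (0::'b::comm_ring_1)"
proof -
  have fcl: "finite (cliques R U)" using assms(2) unfolding cliques_def by auto
  have fC: "finite (CC U n)" using finite_CC assms by auto
  have "(\<Sum>\<gamma>\<in>cliques R U. if card \<gamma> \<le> n then (-1) ^ card \<gamma> * of_nat (NN U (n - card \<gamma>)) else (0::'b))
      = (\<Sum>\<gamma>\<in>cliques R U. \<Sum>Y\<in>CC U n. if card \<gamma> \<le> n \<and> \<gamma> \<subseteq> InitC Y then (-1) ^ card \<gamma> else 0)"
  proof (rule sum.cong[OF refl])
    fix \<gamma> assume g: "\<gamma> \<in> cliques R U"
    show "(if card \<gamma> \<le> n then (-1) ^ card \<gamma> * of_nat (NN U (n - card \<gamma>)) else (0::'b))
      = (\<Sum>Y\<in>CC U n. if card \<gamma> \<le> n \<and> \<gamma> \<subseteq> InitC Y then (-1) ^ card \<gamma> else 0)"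
    proof (cases "card \<gamma> \<le> n")
      case True
      have "of_nat (NN U (n - card \<gamma>)) = (of_nat (card {Y \<in> CC U n. \<gamma> \<subseteq> InitC Y}) :: 'b)"
        using clique_count[OF g assms(1,2) True] by simp
      also have "\<dots> = (\<Sum>Y\<in>{Y \<in> CC U n. \<gamma> \<subseteq> InitC Y}. 1)" by simp
      also have "\<dots> = (\<Sum>Y\<in>CC U n. if \<gamma> \<subseteq> InitC Y then 1 else 0)"
        by (rule sum.inter_filter[OF fC])
      finally show ?thesis using True by (simp add: sum_distrib_left if_distrib cong: if_cong)
    qed simp
  qed
  also have "\<dots> = (\<Sum>Y\<in>CC U n. \<Sum>\<gamma>\<in>cliques R U. if card \<gamma> \<le> n \<and> \<gamma> \<subseteq> InitC Y then (-1) ^ card \<gamma> else 0)"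
    by (rule sum.swap)
  also have "\<dots> = (\<Sum>Y\<in>CC U n. \<Sum>\<gamma>\<in>Pow (InitC Y). (-1) ^ card \<gamma>)"
  proof (rule sum.cong[OF refl])
    fix Y assume "Y \<in> CC U n"
    then obtain y where y: "y \<in> lists U" "length y = n" "Y = trace_of R y" unfolding CC_def by auto
    have yA: "set y \<subseteq> A" using y assms by auto
    have sub: "Pow (InitC Y) = {\<gamma> \<in> cliques R U. card \<gamma> \<le> n \<and> \<gamma> \<subseteq> InitC Y}"
    proof
      show "Pow (InitC Y) \<subseteq> {\<gamma> \<in> cliques R U. card \<gamma> \<le> n \<and> \<gamma> \<subseteq> InitC Y}"
      proof
        fix \<gamma> assume "\<gamma> \<in> Pow (InitC Y)"
        then have g: "\<gamma> \<subseteq> Init y" using y InitC_of by auto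
        then have "\<gamma> \<subseteq> set y" using Init_sub by blast
        then have "\<gamma> \<subseteq> U" "card \<gamma> \<le> n" using y card_mono[of "set y" \<gamma>] card_length[of y] by auto
        moreover have "\<forall>x\<in>\<gamma>. \<forall>z\<in>\<gamma>. x \<noteq> z \<longrightarrow> \<not> R x z" using g Init_commute yA by blast
        ultimately show "\<gamma> \<in> {\<gamma> \<in> cliques R U. card \<gamma> \<le> n \<and> \<gamma> \<subseteq> InitC Y}"
          using g y InitC_of unfolding cliques_def by auto
      qed
    qed auto
    show "(\<Sum>\<gamma>\<in>cliques R U. if card \<gamma> \<le> n \<and> \<gamma> \<subseteq> InitC Y then (-1) ^ card \<gamma> else (0::'b))
        = (\<Sum>\<gamma>\<in>Pow (InitC Y). (-1) ^ card \<gamma>)"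
      unfolding sub by (rule sum.inter_filter[OF fcl, symmetric])
  qed
  also have "\<dots> = (\<Sum>Y\<in>CC U n. (0::'b))"
  proof (rule sum.cong[OF refl])
    fix Y assume "Y \<in> CC U n"
    then obtain y where y: "y \<in> lists U" "length y = n" "Y = trace_of R y" unfolding CC_def by auto
    have "y \<noteq> []" using y assms(3) by auto
    then have "y \<sim>\<^sub>t hd y # tl y" using teq_refl by simp
    then have "hd y \<in> Init y" unfolding Init_def by blast
    moreover have "finite (Init y)" using Init_sub finite_subset by blast
    ultimately show "(\<Sum>\<gamma>\<in>Pow (InitC Y). (-1) ^ card \<gamma>) = (0::'b)"
      using alt_Pow y InitC_of by (metis empty_iff)
  qed
  finally show ?thesis by simp
qed

end



context tr begin

definition MP :: "'a set \<Rightarrow> 'b::comm_ring_1 poly" where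
  "MP U = (\<Sum>\<gamma>\<in>cliques R U. monom ((-1) ^ card \<gamma>) (card \<gamma>))"

definition GF :: "'a set \<Rightarrow> 'b::comm_ring_1 fps" where
  "GF U = Abs_fps (\<lambda>n. of_nat (NN U n))"

lemma poly_MP: "poly (MP U) x = mu R U x"
  unfolding MP_def mu_def by (simp add: poly_sum poly_monom)

lemma coeff_MP: "coeff (MP U) k = (\<Sum>\<gamma>\<in>cliques R U. if card \<gamma> = k then (-1) ^ card \<gamma> else 0)"
  unfolding MP_def by (simp add: coeff_sum)

lemma empty_clique: "{} \<in> cliques R U" unfolding cliques_def by auto

lemma GF_MP:
  assumes "U \<subseteq> A" "finite U"
  shows "GF U * fps_of_poly (MP U) = (1 :: 'b::comm_ring_1 fps)"
proof (rule fps_ext)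
  fix n
  have fin: "finite \<gamma>" if "\<gamma> \<in> cliques R U" for \<gamma>
    using that assms(2) unfolding cliques_def by (auto intro: finite_subset)
  have "(GF U * fps_of_poly (MP U)) $ n
      = (\<Sum>i=0..n. of_nat (NN U i) * (\<Sum>\<gamma>\<in>cliques R U. if card \<gamma> = n - i then (-1) ^ card \<gamma> else (0::'b)))"
    by (simp add: fps_mult_nth GF_def coeff_MP)
  also have "\<dots> = (\<Sum>i=0..n. \<Sum>\<gamma>\<in>cliques R U. if card \<gamma> = n - i then (-1) ^ card \<gamma> * of_nat (NN U i) else (0::'b))"
    by (simp add: sum_distrib_left if_distrib mult.commute cong: if_cong)
  also have "\<dots> = (\<Sum>\<gamma>\<in>cliques R U. \<Sum>i=0..n. if card \<gamma> = n - i then (-1) ^ card \<gamma> * of_nat (NN U i) else (0::'b))"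
    by (rule sum.swap)
  also have "\<dots> = (\<Sum>\<gamma>\<in>cliques R U. if card \<gamma> \<le> n then (-1) ^ card \<gamma> * of_nat (NN U (n - card \<gamma>)) else 0)"
  proof (rule sum.cong[OF refl])
    fix \<gamma> assume "\<gamma> \<in> cliques R U"
    show "(\<Sum>i=0..n. if card \<gamma> = n - i then (-1) ^ card \<gamma> * of_nat (NN U i) else (0::'b))
        = (if card \<gamma> \<le> n then (-1) ^ card \<gamma> * of_nat (NN U (n - card \<gamma>)) else 0)"
    proof (cases "card \<gamma> \<le> n")
      case True
      have "(\<Sum>i=0..n. if card \<gamma> = n - i then (-1) ^ card \<gamma> * of_nat (NN U i) else (0::'b))
          = (\<Sum>i=0..n. if i = n - card \<gamma> then (-1) ^ card \<gamma> * of_nat (NN U i) else (0::'b))"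
        by (rule sum.cong[OF refl]) (use True in auto)
      also have "\<dots> = (-1) ^ card \<gamma> * of_nat (NN U (n - card \<gamma>))"
        by (subst sum.delta) auto
      finally show ?thesis using True by simp
    next
      case False
      then show ?thesis by (intro trans[OF sum.neutral]) auto
    qed
  qed
  also have "\<dots> = (1::'b fps) $ n"
  proof (cases "n = 0")
    case True
    have "(\<Sum>\<gamma>\<in>cliques R U. if card \<gamma> \<le> 0 then (-1) ^ card \<gamma> * of_nat (NN U (0 - card \<gamma>)) else (0::'b))
        = (\<Sum>\<gamma>\<in>cliques R U. if \<gamma> = {} then 1 else 0)"
      by (rule sum.cong[OF refl]) (auto simp: NN_0 dest: fin)
    also have "\<dots> = 1" using empty_clique by (subst sum.delta) (auto simp: cliques_def assms)
    finally have "(\<Sum>\<gamma>\<in>cliques R U. if card \<gamma> \<le> 0 then (-1) ^ card \<gamma> * of_nat (NN U (0 - card \<gamma>)) else (0::'b)) = 1" .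
    then show ?thesis unfolding True by simp
  next
    case False
    then show ?thesis using moebius[OF assms, of n] by simp
  qed
  finally show "(GF U * fps_of_poly (MP U)) $ n = (1::'b fps) $ n" .
qed

lemma decomp:
  assumes "b \<in> A" "U \<subseteq> A" "b \<notin> U" "finite U"
  shows "mu R (insert b U) (X::'b::comm_ring_1) = mu R U X - X * mu R (U - ell R A b) X"
proof -
  have cl: "cliques R (insert b U) = cliques R U \<union> insert b ` cliques R (U - ell R A b)"
  proof
    show "cliques R (insert b U) \<subseteq> cliques R U \<union> insert b ` cliques R (U - ell R A b)"
    proof
      fix \<gamma> assume g: "\<gamma> \<in> cliques R (insert b U)"
      show "\<gamma> \<in> cliques R U \<union> insert b ` cliques R (U - ell R A b)"
      proof (cases "b \<in> \<gamma>")
        case True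
        have gs: "\<gamma> \<subseteq> insert b U" and gp: "\<forall>x\<in>\<gamma>. \<forall>y\<in>\<gamma>. x \<noteq> y \<longrightarrow> \<not> R x y"
          using g unfolding cliques_def by auto
        have "\<gamma> - {b} \<subseteq> U - ell R A b"
        proof
          fix y assume y: "y \<in> \<gamma> - {b}"
          then have "y \<in> U" using gs by auto
          moreover have "\<not> R b y" using gp y True by auto
          ultimately show "y \<in> U - ell R A b" unfolding ell_def by auto
        qed
        then have "\<gamma> - {b} \<in> cliques R (U - ell R A b)"
          using gp unfolding cliques_def by auto
        moreover have "\<gamma> = insert b (\<gamma> - {b})" using True by auto
        ultimately show ?thesis by blast
      next
        case False
        then show ?thesis using g unfolding cliques_def by auto
      qed
    qed
  next
    show "cliques R U \<union> insert b ` cliques R (U - ell R A b) \<subseteq> cliques R (insert b U)"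
    proof
      fix \<gamma> assume "\<gamma> \<in> cliques R U \<union> insert b ` cliques R (U - ell R A b)"
      then show "\<gamma> \<in> cliques R (insert b U)"
      proof
        assume "\<gamma> \<in> cliques R U" then show ?thesis unfolding cliques_def by auto
      next
        assume "\<gamma> \<in> insert b ` cliques R (U - ell R A b)"
        then obtain \<delta> where d: "\<delta> \<in> cliques R (U - ell R A b)" "\<gamma> = insert b \<delta>" by auto
        have "\<not> R b y \<and> \<not> R y b" if "y \<in> \<delta>" for y
        proof -
          have "y \<in> U" "y \<notin> ell R A b" using d(1) that unfolding cliques_def by auto
          then have yA: "y \<in> A" and nb: "\<not> R b y" using assms(2) unfolding ell_def by auto
          then have "\<not> R y b" using symR assms(1) by blast
          then show ?thesis using nb by simp
        qed
        moreover have "\<delta> \<subseteq> U" "\<forall>x\<in>\<delta>. \<forall>y\<in>\<delta>. x \<noteq> y \<longrightarrow> \<not> R x y"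
          using d(1) unfolding cliques_def by auto
        ultimately show ?thesis using d unfolding cliques_def by auto
      qed
    qed
  qed
  have fU: "finite (cliques R U)" using assms(4) unfolding cliques_def by auto
  have fU2: "finite (cliques R (U - ell R A b))" using assms(4) unfolding cliques_def by auto
  have disj: "cliques R U \<inter> insert b ` cliques R (U - ell R A b) = {}"
    using assms(3) unfolding cliques_def by auto
  have inj: "inj_on (insert b) (cliques R (U - ell R A b))"
  proof (rule inj_onI)
    fix x y assume "x \<in> cliques R (U - ell R A b)" "y \<in> cliques R (U - ell R A b)" "insert b x = insert b y"
    moreover have "b \<notin> x" "b \<notin> y" using calculation assms(3) unfolding cliques_def by auto
    ultimately show "x = y" by (metis Diff_insert_absorb)
  qed
  have fin2: "finite \<delta>" "b \<notin> \<delta>" if "\<delta> \<in> cliques R (U - ell R A b)" for \<delta>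
    using that assms unfolding cliques_def by (auto intro: finite_subset)
  have "mu R (insert b U) X = mu R U X + (\<Sum>\<gamma>\<in>insert b ` cliques R (U - ell R A b). (-1) ^ card \<gamma> * X ^ card \<gamma>)"
    unfolding mu_def cl by (rule sum.union_disjoint[OF fU _ disj]) (use fU2 in auto)
  also have "(\<Sum>\<gamma>\<in>insert b ` cliques R (U - ell R A b). (-1) ^ card \<gamma> * X ^ card \<gamma>)
      = (\<Sum>\<delta>\<in>cliques R (U - ell R A b). (-1) ^ card (insert b \<delta>) * X ^ card (insert b \<delta>))"
    by (rule sum.reindex[OF inj, unfolded comp_def])
  also have "\<dots> = (\<Sum>\<delta>\<in>cliques R (U - ell R A b). - (X * ((-1) ^ card \<delta> * X ^ card \<delta>)))"
    by (rule sum.cong[OF refl]) (simp add: fin2)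
  also have "\<dots> = - (X * mu R (U - ell R A b) X)"
    unfolding mu_def by (simp add: sum_negf sum_distrib_left)
  finally show ?thesis by simp
qed

end

locale trf = tr +
  assumes finA: "finite A"
begin

lemma mu_nonzero:
  assumes "ereal (norm (z::complex)) < ereal (p_Sigma R A)"
  shows "mu R A z \<noteq> 0"
proof
  assume "mu R A z = 0"
  then have "norm z \<in> {norm z | z :: complex. mu R A z = 0}" by auto
  moreover have "bdd_below {norm z | z :: complex. mu R A z = 0}"
    by (rule bdd_belowI[of _ 0]) auto
  ultimately have "p_Sigma R A \<le> norm z" unfolding p_Sigma_def by (rule cInf_lower)
  then show False using assms by simp
qed

lemma radius_A: "fps_conv_radius (GF A :: complex fps) \<ge> ereal (p_Sigma R A)"
proof -
  define P where "P = fps_of_poly (MP A :: complex poly)"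
  have "P * GF A = 1" using GF_MP[of A] finA unfolding P_def by (simp add: mult.commute)
  then have inv: "inverse P = GF A" by (rule fps_inverse_unique)
  have "\<And>z. ereal (norm z) < ereal (p_Sigma R A) \<Longrightarrow> eval_fps P z \<noteq> 0"
    unfolding P_def using mu_nonzero by (simp add: poly_MP)
  then have "fps_conv_radius (inverse P) \<ge> min (ereal (p_Sigma R A)) (fps_conv_radius P)"
    by (rule fps_conv_radius_inverse)
  then show ?thesis unfolding inv by (simp add: P_def)
qed

lemma summable_A:
  assumes "0 \<le> q" "q < p_Sigma R A"
  shows "summable (\<lambda>n. real (NN A n) * q ^ n)"
proof -
  have "ereal q < ereal (p_Sigma R A)" using assms by simp
  then have "ereal q < fps_conv_radius (GF A :: complex fps)"
    using radius_A by (rule order.strict_trans2)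
  then have "norm (complex_of_real q) < fps_conv_radius (GF A :: complex fps)"
    using assms by simp
  then have "summable (\<lambda>n. norm (fps_nth (GF A :: complex fps) n * complex_of_real q ^ n))"
    by (rule norm_summable_fps)
  then show ?thesis using assms(1) by (simp add: GF_def norm_mult norm_power)
qed

lemma summable_U:
  assumes "U \<subseteq> A" "0 \<le> q" "q < p_Sigma R A"
  shows "summable (\<lambda>n. real (NN U n) * q ^ n)"
proof (rule summable_comparison_test[OF _ summable_A[OF assms(2,3)]])
  show "\<exists>N. \<forall>n\<ge>N. norm (real (NN U n) * q ^ n) \<le> real (NN A n) * q ^ n"
    using NN_mono[OF assms(1) finA] assms(2) by (auto intro!: mult_right_mono)
qed

definition gU :: "'a set \<Rightarrow> real \<Rightarrow> real" where
  "gU U q = (\<Sum>n. real (NN U n) * q ^ n)"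

lemma gU_mu:
  assumes "U \<subseteq> A" "0 \<le> p" "p < p_Sigma R A"
  shows "gU U p * mu R U p = 1"
proof -
  define q where "q = (p + p_Sigma R A) / 2"
  have q: "0 \<le> q" "q < p_Sigma R A" "p < q" using assms unfolding q_def by auto
  have "summable (\<lambda>n. fps_nth (GF U :: real fps) n * q ^ n)"
    using summable_U[OF assms(1) q(1,2)] by (simp add: GF_def)
  then have "fps_conv_radius (GF U :: real fps) \<ge> norm q"
    unfolding fps_conv_radius_def by (rule conv_radius_geI)
  moreover have "ereal (norm p) < ereal (norm q)" using q assms(2) by simp
  ultimately have r: "norm p < fps_conv_radius (GF U :: real fps)"
    using order.strict_trans2 by blast
  have fU: "finite U" using assms(1) finA finite_subset by auto
  have "GF U * fps_of_poly (MP U) = (1::real fps)" by (rule GF_MP[OF assms(1) fU])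
  then have "1 = eval_fps (GF U * fps_of_poly (MP U)) p" by simp
  also have "\<dots> = eval_fps (GF U) p * eval_fps (fps_of_poly (MP U)) p"
    by (rule eval_fps_mult) (use r in auto)
  also have "\<dots> = gU U p * mu R U p"
  proof -
    have "eval_fps (GF U) p = gU U p" by (simp add: eval_fps_def GF_def gU_def)
    then show ?thesis by (simp add: poly_MP)
  qed
  finally show ?thesis by simp
qed

lemma gU_ge1:
  assumes "U \<subseteq> A" "0 \<le> p" "p < p_Sigma R A"
  shows "gU U p \<ge> 1"
proof -
  have "(\<Sum>n\<in>{0}. real (NN U n) * p ^ n) \<le> gU U p"
    unfolding gU_def by (rule sum_le_suminf[OF summable_U[OF assms]]) (use assms in auto)
  then show ?thesis by (simp add: NN_0)
qed

lemma mu_pos: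
  assumes "U \<subseteq> A" "0 \<le> p" "p < p_Sigma R A"
  shows "mu R U p > 0" "mu R U p = 1 / gU U p"
proof -
  have "gU U p > 0" using gU_ge1[OF assms] by simp
  then show "mu R U p = 1 / gU U p" using gU_mu[OF assms] by (simp add: field_simps)
  then show "mu R U p > 0" using \<open>gU U p > 0\<close> by simp
qed

lemma mu_mono:
  assumes "U \<subseteq> V" "V \<subseteq> A" "0 \<le> p" "p < p_Sigma R A"
  shows "mu R V p \<le> mu R U p"
proof -
  have UA: "U \<subseteq> A" using assms by auto
  have fV: "finite V" using assms(2) finA finite_subset by auto
  have "gU U p \<le> gU V p" unfolding gU_def
    by (rule suminf_le[OF _ summable_U[OF UA assms(3,4)] summable_U[OF assms(2-4)]])
       (use NN_mono[OF assms(1) fV] assms(3) in \<open>auto intro!: mult_right_mono\<close>)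
  then show ?thesis using mu_pos(2)[OF UA assms(3,4)] mu_pos(2)[OF assms(2-4)] gU_ge1[OF UA assms(3,4)]
    by (simp add: frac_le)
qed

lemma infsum_M:
  assumes "U \<subseteq> A" "0 \<le> p" "p < p_Sigma R A"
  shows "infsum (\<lambda>x. p ^ trace_len x) (trace_monoid R U) = gU U p"
proof -
  have fU: "finite U" using assms(1) finA finite_subset by auto
  let ?f = "\<lambda>(n::nat, x::'a list set). p ^ n"
  have fib: "((\<lambda>x. ?f (n, x)) has_sum (real (NN U n) * p ^ n)) (CC U n)" for n
    by (rule has_sum_finiteI) (auto simp: finite_CC fU NN_def)
  have g: "((\<lambda>n. real (NN U n) * p ^ n) has_sum gU U p) UNIV"
    unfolding gU_def using summable_U[OF assms] assms(2)
    by (intro sums_nonneg_imp_has_sum summable_sums) auto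
  have sm: "?f summable_on Sigma UNIV (CC U)"
    by (rule summable_on_SigmaI[OF fib]) (use g assms(2) in \<open>auto simp: summable_on_def\<close>)
  have hs: "(?f has_sum gU U p) (Sigma UNIV (CC U))"
    by (rule has_sum_SigmaI[OF fib g sm])
  have bij: "bij_betw (\<lambda>x. (trace_len x, x)) (trace_monoid R U) (Sigma UNIV (CC U))"
  proof (rule bij_betwI')
    show "\<And>x y. x \<in> trace_monoid R U \<Longrightarrow> y \<in> trace_monoid R U \<Longrightarrow> ((trace_len x, x) = (trace_len y, y)) = (x = y)"
      by auto
    show "\<And>x. x \<in> trace_monoid R U \<Longrightarrow> (trace_len x, x) \<in> Sigma UNIV (CC U)"
      unfolding trace_monoid_def CC_def by (auto simp: trace_len_of)
    show "\<And>y. y \<in> Sigma UNIV (CC U) \<Longrightarrow> \<exists>x\<in>trace_monoid R U. y = (trace_len x, x)"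
      unfolding trace_monoid_def CC_def by (auto simp: trace_len_of)
  qed
  have "((\<lambda>x. ?f (trace_len x, x)) has_sum gU U p) (trace_monoid R U)"
    using has_sum_reindex_bij_betw[OF bij] hs by blast
  then show ?thesis by (simp add: infsumI)
qed

end



theorem mainTheorem12:
  fixes R :: "'a \<Rightarrow> 'a \<Rightarrow> bool" and \<Sigma> S T :: "'a set" and a :: 'a and p :: real
  assumes "finite \<Sigma>"
    and "\<forall>x\<in>\<Sigma>. R x x"
    and "\<forall>x\<in>\<Sigma>. \<forall>y\<in>\<Sigma>. R x y \<longrightarrow> R y x"
    and "0 < p" and "p < p_Sigma R \<Sigma>"
    and "S \<subseteq> \<Sigma>"
    and "a \<in> \<Sigma> - S"
    and "ell R \<Sigma> a \<inter> S \<noteq> {}"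
    and "T = S - ell R \<Sigma> a"
  shows "mu R S p / mu R T p = B R S p (trace_monoid R T)
         \<and> p \<le> mu R S p / mu R T p \<and> mu R S p / mu R T p \<le> 1 - p"
proof -
  interpret trf R \<Sigma> using assms(1,2,3) by unfold_locales auto
  have p0: "0 \<le> p" using assms(4) by simp
  note pS = assms(5)
  have TS: "T \<subseteq> S" using assms(9) by auto
  have TA: "T \<subseteq> \<Sigma>" using TS assms(6) by auto
  have fS: "finite S" using assms(1,6) finite_subset by auto
  have mT: "mu R T p > 0" "mu R T p = 1 / gU T p" using mu_pos[OF TA p0 pS] by auto
  have mS: "mu R S p > 0" using mu_pos[OF assms(6) p0 pS] by auto
  have part1: "mu R S p / mu R T p = B R S p (trace_monoid R T)"
  proof -
    have "B R S p (trace_monoid R T) = mu R S p * infsum (\<lambda>x. p ^ trace_len x) (trace_monoid R T)"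
      unfolding B_def by (rule infsum_cmult_right')
    also have "\<dots> = mu R S p * gU T p" using infsum_M[OF TA p0 pS] by simp
    finally show ?thesis using mT by simp
  qed
  have aS: "a \<in> \<Sigma>" "a \<notin> S" using assms(7) by auto
  have "mu R (insert a S) p = mu R S p - p * mu R (S - ell R \<Sigma> a) p"
    by (rule decomp[OF aS(1) assms(6) aS(2) fS])
  moreover have "mu R (insert a S) p > 0" using mu_pos[of "insert a S", OF _ p0 pS] aS assms(6) by auto
  ultimately have "p * mu R T p < mu R S p" using assms(9) by simp
  then have part2: "p \<le> mu R S p / mu R T p" using mT(1) by (simp add: pos_le_divide_eq)
  obtain b where b: "b \<in> ell R \<Sigma> a" "b \<in> S" using assms(8) by auto
  define V where "V = S - {b}"
  have VA: "V \<subseteq> \<Sigma>" using assms(6) V_def by auto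
  have bA: "b \<in> \<Sigma>" using b assms(6) by auto
  have SV: "S = insert b V" using b V_def by auto
  have fV: "finite V" using fS V_def by auto
  have eq: "mu R S p = mu R V p - p * mu R (V - ell R \<Sigma> b) p"
    unfolding SV by (rule decomp[OF bA VA _ fV]) (simp add: V_def)
  have "mu R V p \<le> mu R (V - ell R \<Sigma> b) p"
    by (rule mu_mono[OF _ VA p0 pS]) auto
  then have "p * mu R V p \<le> p * mu R (V - ell R \<Sigma> b) p" using p0 by (rule mult_left_mono)
  then have "mu R S p \<le> (1 - p) * mu R V p" using eq by (simp add: algebra_simps)
  moreover have mV: "mu R V p > 0" using mu_pos[OF VA p0 pS] by auto
  ultimately have "mu R S p / mu R V p \<le> 1 - p" by (simp add: pos_divide_le_eq)
  moreover have "T \<subseteq> V" using TS b assms(9) V_def by auto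
  then have "mu R V p \<le> mu R T p" by (rule mu_mono[OF _ VA p0 pS])
  then have "mu R S p / mu R T p \<le> mu R S p / mu R V p"
    using mV mS by (intro divide_left_mono) auto
  ultimately have part3: "mu R S p / mu R T p \<le> 1 - p" by linarith
  show ?thesis using part1 part2 part3 by blast
qed


end
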